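(* Let $\kappa\ge2$ be a real number. Then $\lim_{\zeta\to0^+}\Upsilon_{\kappa,\zeta}=0$.
   Context: For real $\kappa\ge2$, $\mathcal{P}_\kappa$ is the set of all irreducible monic polynomials $p\in\mathbb{Z}[x]$ all of whose roots lie in $[-\kappa,\kappa]$. For real $\zeta>0$, $\mathbf{I}_{\kappa,\zeta}$ is the set of all closed intervals of length $\zeta$ contained in $[-\kappa,\kappa]$. For $p\in\mathcal{P}_\kappa$ and $I\in\mathbf{I}_{\kappa,\zeta}$ put $\Upsilon_\kappa(p,I)=\big(|\{\theta\in I:p(\theta)=0\}|-1\big)/\deg p$, and $\Upsilon_{\kappa,\zeta}=\sup\{\Upsilon_\kappa(p,I):p\in\mathcal{P}_\kappa,\ I\in\mathbf{I}_{\kappa,\zeta}\}$. *)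

theory Defs
  imports "HOL-Analysis.Analysis" "HOL-Computational_Algebra.Polynomial_Factorial"
begin

definition P_set :: "real \<Rightarrow> int poly set" where
  "P_set \<kappa> = {p. irreducible p \<and> lead_coeff p = 1 \<and>
     (\<forall>z::complex. poly (map_poly of_int p) z = 0 \<longrightarrow> z \<in> \<real> \<and> \<bar>Re z\<bar> \<le> \<kappa>)}"

definition I_set :: "real \<Rightarrow> real \<Rightarrow> real set set" where
  "I_set \<kappa> \<zeta> = {{a..a + \<zeta>} | a. {a..a + \<zeta>} \<subseteq> {-\<kappa>..\<kappa>}}"

definition Upsilon_pI :: "int poly \<Rightarrow> real set \<Rightarrow> real" where
  "Upsilon_pI p I =
     (real (card {\<theta>::real. \<theta> \<in> I \<and> poly (map_poly of_int p) \<theta> = 0}) - 1) / real (degree p)"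

definition Upsilon :: "real \<Rightarrow> real \<Rightarrow> real" where
  "Upsilon \<kappa> \<zeta> = Sup {Upsilon_pI p I | p I. p \<in> P_set \<kappa> \<and> I \<in> I_set \<kappa> \<zeta>}"

end

theory Submission
  imports Defs "Berlekamp_Zassenhaus.Square_Free_Int_To_Square_Free_GFp" "HOL-Real_Asymp.Real_Asymp"
begin


lemma vandermonde_nonsing:
  fixes as :: "complex list"
  assumes dist: "distinct as" and n: "length as = n"
  shows "det (mat n n (\<lambda>(j,k). (as!j)^k)) \<noteq> 0"
proof
  define V where "V = (mat n n (\<lambda>(j,k). (as!j)^k) :: complex mat)"
  assume "det (mat n n (\<lambda>(j,k). (as!j)^k)) = 0"
  hence "det V = 0" unfolding V_def .
  moreover have V: "V \<in> carrier_mat n n" unfolding V_def by simp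
  ultimately obtain v where v: "v \<in> carrier_vec n" "v \<noteq> 0\<^sub>v n" "V *\<^sub>v v = 0\<^sub>v n"
    using det_0_iff_vec_prod_zero_field by blast
  define r where "r = (\<Sum>k<n. Polynomial.monom (v $ k) k)"
  have coeffr: "Polynomial.coeff r i = v $ i" if "i < n" for i
    using that unfolding r_def by (simp add: coeff_sum Polynomial.coeff_monom)
  have "r \<noteq> 0"
  proof
    assume "r = 0"
    hence "\<forall>i<n. v $ i = 0" using coeffr by (metis Polynomial.coeff_0)
    hence "v = 0\<^sub>v n" using v(1) by (intro eq_vecI) auto
    with v(2) show False by simp
  qed
  have degr: "degree r < n"
  proof -
    have "n > 0"
    proof (rule ccontr)
      assume "\<not> n > 0" hence "n = 0" by simp
      hence "v = 0\<^sub>v n" using v(1) by (intro eq_vecI) auto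
      thus False using v(2) by simp
    qed
    have "degree r \<le> n - 1" unfolding r_def
      by (rule degree_sum_le) (auto intro: order.trans[OF degree_monom_le])
    thus ?thesis using \<open>n > 0\<close> by simp
  qed
  have roots: "set as \<subseteq> {x. poly r x = 0}"
  proof
    fix x assume "x \<in> set as"
    then obtain j where j: "j < n" "x = as ! j" using n by (metis in_set_conv_nth)
    have "(V *\<^sub>v v) $ j = 0" using v(3) j by simp
    moreover have "(V *\<^sub>v v) $ j = (\<Sum>k<n. x^k * v $ k)"
      using j v(1) unfolding V_def by (simp add: scalar_prod_def lessThan_atLeast0 mult.commute)
    moreover have "poly r x = (\<Sum>k<n. v $ k * x^k)" unfolding r_def by (simp add: poly_sum poly_monom)
    ultimately show "x \<in> {x. poly r x = 0}" by (simp add: mult.commute)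
  qed
  have "n = card (set as)" using dist n by (simp add: distinct_card)
  also have "\<dots> \<le> card {x. poly r x = 0}"
    by (rule card_mono[OF poly_roots_finite[OF \<open>r \<noteq> 0\<close>] roots])
  also have "\<dots> \<le> degree r" by (rule card_poly_roots_bound[OF \<open>r \<noteq> 0\<close>])
  finally show False using degr by simp
qed

lemma norm_integral:
  fixes p q :: "int poly" and as :: "complex list"
  assumes mon: "lead_coeff p = 1" and len: "length as = degree p" and dist: "distinct as"
  and roots: "\<forall>a\<in>set as. poly (map_poly of_int p) a = 0"
  shows "\<exists>k::int. (\<Prod>j<degree p. poly (map_poly of_int q) (as ! j)) = of_int k"
proof -
  define n where "n = degree p"
  define C :: "int mat" where "C = mat n n (\<lambda>(l,k). if Suc k < n then (if l = Suc k then 1 else 0)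
      else - Polynomial.coeff p l)"
  define H where "H cs = foldr (\<lambda>c M. c \<cdot>\<^sub>m 1\<^sub>m n + C * M) cs (0\<^sub>m n n)" for cs :: "int list"
  define hc where "hc cs a = foldr (\<lambda>c y. of_int c + a * y) cs (0::complex)" for cs a
  define V :: "complex mat" where "V = mat n n (\<lambda>(j,k). (as!j)^k)"
  define D where "D f = (mat n n (\<lambda>(j,k). if j = k then f (as ! j) else 0) :: complex mat)" for f
  have C: "C \<in> carrier_mat n n" unfolding C_def by simp
  have V: "V \<in> carrier_mat n n" unfolding V_def by simp
  have D: "D f \<in> carrier_mat n n" for f unfolding D_def by simp
  have H: "H cs \<in> carrier_mat n n" for cs unfolding H_def using C by (induction cs) auto
  have DX: "(D f * X) $$ (i,j) = f (as!i) * X $$ (i,j)" if X: "X \<in> carrier_mat n n" and ij: "i < n" "j < n" for f X i j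
  proof -
    have "(D f * X) $$ (i,j) = (\<Sum>l<n. (if i = l then f (as ! i) else 0) * X $$ (l,j))"
      using X ij unfolding D_def by (simp add: scalar_prod_def lessThan_atLeast0)
    also have "\<dots> = (\<Sum>l<n. if l = i then f (as ! i) * X $$ (i,j) else 0)"
      by (intro sum.cong) auto
    finally show ?thesis using ij by simp
  qed
  have VC: "V * map_mat of_int C = D (\<lambda>a. a) * V"
  proof (rule eq_matI)
    fix j k assume j: "j < dim_row (D (\<lambda>a. a) * V)" and k: "k < dim_col (D (\<lambda>a. a) * V)"
    hence j: "j < n" and k: "k < n" using V D[of "\<lambda>a. a"] by auto
    define a where "a = as ! j"
    have a: "poly (map_poly of_int p) a = 0" using roots j len unfolding a_def n_def by auto
    have rhs: "(D (\<lambda>a. a) * V) $$ (j,k) = a * a^k"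
    proof -
      have "(D (\<lambda>a. a) * V) $$ (j,k) = (\<Sum>i<n. (if j = i then a else 0) * (as!i)^k)"
        using j k V D unfolding D_def V_def a_def
        by (simp add: scalar_prod_def lessThan_atLeast0 row_def col_def)
      also have "\<dots> = (\<Sum>i<n. if i = j then a * a^k else 0)"
        by (intro sum.cong) (auto simp: a_def)
      also have "\<dots> = a * a^k" using j by simp
      finally show ?thesis .
    qed
    have lhs: "(V * map_mat of_int C) $$ (j,k) = (\<Sum>l<n. a^l * of_int (C $$ (l,k)))"
      using j k V C unfolding V_def a_def
      by (simp add: scalar_prod_def lessThan_atLeast0)
    show "(V * map_mat of_int C) $$ (j,k) = (D (\<lambda>a. a) * V) $$ (j,k)"
    proof (cases "Suc k < n")
      case True
      have "(\<Sum>l<n. a^l * of_int (C $$ (l,k))) = (\<Sum>l<n. if l = Suc k then a^l else 0)"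
        using True by (intro sum.cong) (auto simp: C_def)
      also have "\<dots> = a^Suc k" using True by simp
      finally show ?thesis using lhs rhs by simp
    next
      case False
      with k have kn: "Suc k = n" by simp
      have "(\<Sum>l<n. a^l * of_int (C $$ (l,k))) = - (\<Sum>l<n. of_int (Polynomial.coeff p l) * a^l)"
        using False k by (auto simp: C_def sum_negf[symmetric] mult.commute intro!: sum.cong)
      also have "\<dots> = a ^ n"
      proof -
        have "0 = poly (map_poly of_int p) a" using a by simp
        also have "\<dots> = (\<Sum>l\<le>n. of_int (Polynomial.coeff p l) * a^l)"
          unfolding poly_altdef n_def by (simp add: of_int_hom.degree_map_poly_hom)
        also have "\<dots> = (\<Sum>l<n. of_int (Polynomial.coeff p l) * a^l) + a^n"
          using mon unfolding n_def by (simp add: lessThan_Suc_atMost[symmetric])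
        finally show ?thesis by (metis add.commute add_eq_0_iff2 minus_equation_iff)
      qed
      finally show ?thesis using lhs rhs kn[symmetric] by simp
    qed
  qed (use V C in \<open>auto simp: D_def\<close>)
  have main: "V * map_mat of_int (H cs) = D (hc cs) * V" for cs
  proof (induction cs)
    case Nil
    show ?case
      by (rule eq_matI) (use V in \<open>auto simp: H_def hc_def D_def scalar_prod_def\<close>)
  next
    case (Cons c cs)
    have e1: "map_mat of_int (H (c # cs)) = of_int c \<cdot>\<^sub>m 1\<^sub>m n + map_mat of_int C * map_mat of_int (H cs)"
      unfolding H_def[of "c # cs"] foldr.simps o_def H_def[of cs, symmetric]
      by (subst of_int_hom.mat_hom_mult[OF C H, symmetric]) (rule eq_matI, use C H[of cs] in auto)
    have "V * map_mat of_int (H (c # cs)) =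
       of_int c \<cdot>\<^sub>m V + (V * map_mat of_int C) * map_mat of_int (H cs)"
    proof -
      have Cc: "map_mat of_int C \<in> carrier_mat n n" and Hc: "map_mat of_int (H cs) \<in> carrier_mat n n"
        using C H[of cs] by auto
      have "V * map_mat of_int (H (c # cs)) = V * (of_int c \<cdot>\<^sub>m 1\<^sub>m n) + V * (map_mat of_int C * map_mat of_int (H cs))"
        unfolding e1 by (rule mult_add_distrib_mat[OF V]) (use Cc Hc in auto)
      also have "V * (of_int c \<cdot>\<^sub>m 1\<^sub>m n) = of_int c \<cdot>\<^sub>m V"
        using mult_smult_distrib[OF V one_carrier_mat] V by simp
      also have "V * (map_mat of_int C * map_mat of_int (H cs)) = (V * map_mat of_int C) * map_mat of_int (H cs)"
        using assoc_mult_mat[OF V Cc Hc] by simp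
      finally show ?thesis .
    qed
    also have "\<dots> = of_int c \<cdot>\<^sub>m V + D (\<lambda>a. a) * (D (hc cs) * V)"
      unfolding VC using V C H D Cons.IH[symmetric] by (simp add: assoc_mult_mat[of _ n n _ n _ n])
    also have "\<dots> = D (hc (c # cs)) * V"
    proof (rule eq_matI)
      fix i j assume ij: "i < dim_row (D (hc (c # cs)) * V)" "j < dim_col (D (hc (c # cs)) * V)"
      hence ij: "i < n" "j < n" using V unfolding D_def by auto
      have DV: "D (hc cs) * V \<in> carrier_mat n n" using V unfolding D_def by auto
      show "(of_int c \<cdot>\<^sub>m V + D (\<lambda>a. a) * (D (hc cs) * V)) $$ (i, j) = (D (hc (c # cs)) * V) $$ (i, j)"
      proof -
        have X: "D (\<lambda>a. a) * (D (hc cs) * V) \<in> carrier_mat n n" using mult_carrier_mat[OF D DV] .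
        have "(of_int c \<cdot>\<^sub>m V + D (\<lambda>a. a) * (D (hc cs) * V)) $$ (i, j)
           = of_int c * V $$ (i,j) + (D (\<lambda>a. a) * (D (hc cs) * V)) $$ (i, j)"
          using ij V by (simp add: D_def)
        also have "\<dots> = of_int c * V $$ (i,j) + as ! i * (hc cs (as ! i) * V $$ (i,j))"
          by (simp add: DX[OF DV ij] DX[OF V ij])
        also have "\<dots> = (D (hc (c # cs)) * V) $$ (i, j)"
          by (simp add: DX[OF V ij] hc_def algebra_simps)
        finally show ?thesis .
      qed
    qed (use V in \<open>auto simp: D_def\<close>)
    finally show ?case .
  qed
  have hcq: "hc (coeffs q) a = poly (map_poly of_int q) a" for a
  proof -
    have "hc cs a = poly (map_poly of_int (Poly cs)) a" for cs
      by (induction cs) (auto simp: hc_def of_int_hom.map_poly_pCons_hom)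
    thus ?thesis by simp
  qed
  have "det V * of_int (det (H (coeffs q))) = det (V * map_mat of_int (H (coeffs q)))"
    using V H by (simp add: det_mult[of _ n] of_int_hom.hom_det)
  also have "\<dots> = det (D (hc (coeffs q))) * det V"
    unfolding main using V D by (simp add: det_mult[of _ n])
  also have "det (D (hc (coeffs q))) = (\<Prod>j<n. poly (map_poly of_int q) (as ! j))"
    by (subst det_upper_triangular[of _ n]) (auto simp: D_def hcq prod_list_diag_prod lessThan_atLeast0)
  finally have "of_int (det (H (coeffs q))) = (\<Prod>j<n. poly (map_poly of_int q) (as ! j))"
    using vandermonde_nonsing[OF dist len] unfolding V_def n_def by simp
  thus ?thesis unfolding n_def by (metis)
qed


lemma irreducible_imp_square_free':
  assumes irr: "irreducible (p::'a::idom poly)" shows "square_free p"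
proof(intro square_freeI)
  from irr show p0: "p \<noteq> 0" by auto
  fix a assume "a * a dvd p"
  then obtain b where paab: "p = a * (a * b)" by (elim dvdE, auto)
  assume "degree a > 0"
  then have a1: "\<not> a dvd 1" by (auto simp: poly_dvd_1)
  then have ab1: "\<not> a * b dvd 1" using dvd_mult_left by auto
  from paab irr a1 ab1 show False by force
qed

lemma fh0: "field_hom_0' (of_rat :: rat \<Rightarrow> complex)"
  unfolding field_hom_0'_def by (rule of_rat_hom.field_hom_axioms)

lemma disc_bound:
  fixes p :: "int poly" and \<kappa> :: real
  assumes P: "p \<in> P_set \<kappa>"
  defines "R \<equiv> {\<theta>::real. poly (map_poly of_int p) \<theta> = 0}"
  shows "finite R \<and> card R = degree p \<and> degree p \<ge> 1 \<and> R \<subseteq> {-\<kappa>..\<kappa>}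
     \<and> 1 \<le> (\<Prod>x\<in>R. \<Prod>y\<in>R-{x}. \<bar>x - y\<bar>)"
proof -
  have irr: "irreducible p" and mon: "lead_coeff p = 1"
    and rts: "\<And>z::complex. poly (map_poly of_int p) z = 0 \<Longrightarrow> z \<in> \<real> \<and> \<bar>Re z\<bar> \<le> \<kappa>"
    using P unfolding P_set_def by auto
  define n where "n = degree p"
  have p0: "p \<noteq> 0" using irr by auto
  have n1: "n \<ge> 1"
  proof (rule ccontr)
    assume "\<not> n \<ge> 1" hence "degree p = 0" unfolding n_def by simp
    hence "p = [:1:]" using mon by (metis leading_coeff_0_iff degree_0_id one_pCons)
    hence "p = 1" by simp
    thus False using irr by simp
  qed
  define pc :: "complex poly" where "pc = map_poly of_int p"
  have pc_eq: "pc = map_poly of_rat (map_poly rat_of_int p)"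
    unfolding pc_def by (subst map_poly_map_poly) (auto simp: o_def)
  have sf: "square_free pc"
    unfolding pc_eq field_hom_0'.square_free_map_poly[OF fh0]
    by (rule square_free_int_rat[OF irreducible_imp_square_free'[OF irr]])
  have rsf: "rsquarefree pc" by (rule square_free_rsquarefree[OF sf])
  have degpc: "degree pc = n" unfolding pc_def n_def by (simp add: of_int_hom.degree_map_poly_hom)
  have lcpc: "lead_coeff pc = 1" unfolding pc_def using mon by (simp add: of_int_hom.hom_lead_coeff)
  obtain as where as: "Polynomial.smult (lead_coeff pc) (\<Prod>a\<leftarrow>as. [:- a, 1:]) = pc" and las: "length as = degree pc"
    using fundamental_theorem_algebra_factorized[of pc] by blast
  have pcas: "pc = (\<Prod>a\<leftarrow>as. [:- a, 1:])" using as lcpc by simp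
  have pc0: "pc \<noteq> 0" using lcpc by auto
  have rootsS: "{x. poly pc x = 0} = set as" unfolding pcas poly_prod_list prod_list_zero_iff by auto
  have "card (set as) = length as"
    using rsquarefree_card_degree[OF pc0] rsf rootsS las by simp
  hence dist: "distinct as" by (simp add: card_distinct)
  have pcS: "pc = (\<Prod>a\<in>set as. [:- a, 1:])" unfolding pcas by (simp add: prod.distinct_set_conv_list[OF dist])
  obtain k where k: "(\<Prod>j<degree p. poly (map_poly of_int (pderiv p)) (as ! j)) = (of_int k :: complex)"
    using norm_integral[OF mon, of as "pderiv p"] las degpc dist rootsS unfolding n_def pc_def by auto
  have prodS: "(\<Prod>j<degree p. poly (map_poly of_int (pderiv p)) (as ! j)) = (\<Prod>b\<in>set as. poly (pderiv pc) b)"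
  proof -
    have "(\<Prod>j<degree p. poly (map_poly of_int (pderiv p)) (as ! j)) = (\<Prod>j<length as. poly (pderiv pc) (as ! j))"
      using las degpc unfolding n_def pc_def by (simp add: of_int_hom.map_poly_pderiv)
    also have "\<dots> = (\<Prod>b\<in>set as. poly (pderiv pc) b)"
      by (rule prod.reindex_bij_betw[OF bij_betw_nth[OF dist refl refl]])
    finally show ?thesis .
  qed
  have nz: "poly (pderiv pc) b \<noteq> 0" if "b \<in> set as" for b
    using rsf that rootsS unfolding rsquarefree_roots by auto
  have "k \<noteq> 0" using k prodS nz by (metis (no_types, lifting) List.finite_set of_int_0 prod_zero_iff)
  hence k1: "1 \<le> norm (of_int k :: complex)" by (simp del: of_int_0_eq_iff add: norm_of_int)
  have dform: "poly (pderiv pc) b = (\<Prod>c\<in>set as - {b}. b - c)" if "b \<in> set as" for b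
  proof -
    have "poly (pderiv pc) b = (\<Sum>a\<in>set as. poly (\<Prod>c\<in>set as - {a}. [:- c, 1:]) b)"
      unfolding pcS pderiv_prod by (simp add: poly_sum pderiv_pCons)
    also have "\<dots> = (\<Sum>a\<in>set as. if a = b then (\<Prod>c\<in>set as - {b}. b - c) else 0)"
    proof (intro sum.cong refl)
      fix a assume a: "a \<in> set as"
      show "poly (\<Prod>c\<in>set as - {a}. [:- c, 1:]) b = (if a = b then (\<Prod>c\<in>set as - {b}. b - c) else 0)"
      proof (cases "a = b")
        case True thus ?thesis by (simp add: poly_prod)
      next
        case False
        hence "b \<in> set as - {a}" using that by auto
        thus ?thesis using False by (simp add: poly_prod prod_zero_iff)
      qed
    qed
    also have "\<dots> = (\<Prod>c\<in>set as - {b}. b - c)" using that by simp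
    finally show ?thesis .
  qed
  have realroot: "poly pc (of_real x) = of_real (poly (map_poly of_int p) x)" for x :: real
  proof -
    have "pc = map_poly of_real (map_poly of_int p)"
      unfolding pc_def by (subst map_poly_map_poly) (auto simp: o_def)
    thus ?thesis by (simp add: of_real_hom.poly_map_poly)
  qed
  have SR: "set as = of_real ` R"
  proof
    show "set as \<subseteq> of_real ` R"
    proof
      fix z assume z: "z \<in> set as"
      hence "poly pc z = 0" using rootsS by auto
      hence "z \<in> \<real>" using rts unfolding pc_def by auto
      then obtain x where x: "z = of_real x" by (auto elim: Reals_cases)
      have "poly (map_poly of_int p) x = 0" using \<open>poly pc z = 0\<close> realroot[of x] x by simp
      thus "z \<in> of_real ` R" using x unfolding R_def by auto
    qed
    show "of_real ` R \<subseteq> set as" using realroot rootsS unfolding R_def by auto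
  qed
  have inj: "inj_on (of_real :: real \<Rightarrow> complex) R" by (auto intro: inj_onI)
  have finR: "finite R" using SR by (metis List.finite_set finite_imageD inj)
  have cardR: "card R = n"
    using card_image[OF inj] SR dist las degpc by (metis distinct_card)
  have Rk: "R \<subseteq> {-\<kappa>..\<kappa>}"
  proof
    fix x assume "x \<in> R"
    hence "poly pc (of_real x) = 0" using realroot unfolding R_def by simp
    hence "\<bar>Re (of_real x)\<bar> \<le> \<kappa>" using rts unfolding pc_def by blast
    thus "x \<in> {-\<kappa>..\<kappa>}" by auto
  qed
  have "1 \<le> norm (\<Prod>b\<in>set as. poly (pderiv pc) b)" using k1 k prodS by simp
  also have "\<dots> = norm (\<Prod>b\<in>set as. \<Prod>c\<in>set as - {b}. b - c)"
    using dform by (metis (mono_tags, lifting) prod.cong)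
  also have "\<dots> = (\<Prod>x\<in>R. \<Prod>y\<in>R-{x}. \<bar>x - y\<bar>)"
  proof -
    have "(\<Prod>b\<in>set as. \<Prod>c\<in>set as - {b}. b - c) = (\<Prod>x\<in>R. \<Prod>c\<in>of_real ` R - {of_real x}. of_real x - c)"
      unfolding SR by (rule prod.reindex[OF inj, unfolded o_def])
    also have "\<dots> = (\<Prod>x\<in>R. \<Prod>y\<in>R - {x}. of_real (x - y))"
    proof (intro prod.cong refl)
      fix x assume "x \<in> R"
      have e: "(of_real ` R - {of_real x} :: complex set) = of_real ` (R - {x})" by auto
      have i2: "inj_on (of_real :: real \<Rightarrow> complex) (R - {x})" by (auto intro: inj_onI)
      show "(\<Prod>c\<in>of_real ` R - {of_real x}. of_real x - c) = (\<Prod>y\<in>R - {x}. (of_real (x - y) :: complex))"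
        unfolding e prod.reindex[OF i2] by (simp add: o_def)
    qed
    finally show ?thesis by (simp add: prod_norm[symmetric] of_real_diff[symmetric] norm_of_real del: of_real_diff)
  qed
  finally show ?thesis using finR cardR n1 Rk unfolding n_def by auto
qed



lemma cluster_bound:
  fixes R :: "real set" and \<kappa> \<zeta> a :: real
  assumes finR: "finite R" and cardR: "card R = n" and Rk: "R \<subseteq> {-\<kappa>..\<kappa>}" and k2: "\<kappa> \<ge> 2"
    and disc: "1 \<le> (\<Prod>x\<in>R. \<Prod>y\<in>R-{x}. \<bar>x - y\<bar>)"
    and z: "0 < \<zeta>" "\<zeta> \<le> 1"
  defines "T \<equiv> R \<inter> {a..a+\<zeta>}"
  shows "1 \<le> \<zeta> ^ ((card T - 1) * card T) * (2*\<kappa>) ^ (n * n)"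
proof -
  define m where "m = card T"
  have finT: "finite T" using finR unfolding T_def by auto
  have TR: "T \<subseteq> R" unfolding T_def by auto
  have K1: "1 \<le> 2*\<kappa>" using k2 by simp
  have diffK: "\<bar>x - y\<bar> \<le> 2*\<kappa>" if "x \<in> R" "y \<in> R" for x y
  proof -
    have "-\<kappa> \<le> x" "x \<le> \<kappa>" "-\<kappa> \<le> y" "y \<le> \<kappa>" using Rk that by auto
    thus ?thesis by linarith
  qed
  have genK: "(\<Prod>y\<in>A. \<bar>x - y\<bar>) \<le> (2*\<kappa>)^n" if "A \<subseteq> R" "x \<in> R" for A x
  proof -
    have finA: "finite A" using finR that(1) finite_subset by auto
    have "(\<Prod>y\<in>A. \<bar>x - y\<bar>) \<le> (\<Prod>y\<in>A. 2*\<kappa>)"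
      by (rule prod_mono) (use that diffK in auto)
    also have "\<dots> = (2*\<kappa>)^card A" by simp
    also have "\<dots> \<le> (2*\<kappa>)^n"
      by (rule power_increasing[OF _ K1]) (use card_mono[OF finR that(1)] cardR in auto)
    finally show ?thesis .
  qed
  have each: "(\<Prod>y\<in>R-{x}. \<bar>x - y\<bar>) \<le> (if x \<in> T then \<zeta>^(m-1) else 1) * (2*\<kappa>)^n" if x: "x \<in> R" for x
  proof (cases "x \<in> T")
    case False
    thus ?thesis using genK[of "R-{x}" x] x by auto
  next
    case True
    have split: "R - {x} = (T - {x}) \<union> (R - T)" using True TR by auto
    have "(\<Prod>y\<in>R-{x}. \<bar>x - y\<bar>) = (\<Prod>y\<in>T-{x}. \<bar>x - y\<bar>) * (\<Prod>y\<in>R-T. \<bar>x - y\<bar>)"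
      unfolding split by (rule prod.union_disjoint) (use finR finT in auto)
    also have "\<dots> \<le> \<zeta>^(m-1) * (2*\<kappa>)^n"
    proof (rule mult_mono)
      have "(\<Prod>y\<in>T-{x}. \<bar>x - y\<bar>) \<le> (\<Prod>y\<in>T-{x}. \<zeta>)"
        by (rule prod_mono) (use True in \<open>auto simp: T_def\<close>)
      also have "\<dots> = \<zeta>^(m-1)" using True finT unfolding m_def by simp
      finally show "(\<Prod>y\<in>T-{x}. \<bar>x - y\<bar>) \<le> \<zeta>^(m-1)" .
      show "(\<Prod>y\<in>R-T. \<bar>x - y\<bar>) \<le> (2*\<kappa>)^n" using genK[of "R-T" x] x by auto
    qed (use z in \<open>auto intro: prod_nonneg\<close>)
    finally show ?thesis using True by simp
  qed
  have "1 \<le> (\<Prod>x\<in>R. \<Prod>y\<in>R-{x}. \<bar>x - y\<bar>)" by (rule disc)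
  also have "\<dots> \<le> (\<Prod>x\<in>R. (if x \<in> T then \<zeta>^(m-1) else 1) * (2*\<kappa>)^n)"
    by (rule prod_mono) (use each in \<open>auto intro: prod_nonneg\<close>)
  also have "\<dots> = (\<Prod>x\<in>R. (if x \<in> T then \<zeta>^(m-1) else 1)) * (2*\<kappa>)^(n*n)"
    by (simp add: prod.distrib cardR power_mult)
  also have "(\<Prod>x\<in>R. (if x \<in> T then \<zeta>^(m-1) else 1)) = (\<Prod>x\<in>T. \<zeta>^(m-1))"
  proof -
    have "{x \<in> R. x \<in> T} = T" using TR by auto
    thus ?thesis using finR by (simp add: prod.If_cases Int_def)
  qed
  also have "\<dots> = \<zeta> ^ ((m-1) * m)" unfolding m_def by (simp add: power_mult)
  finally show ?thesis unfolding m_def .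
qed

lemma log_bound:
  fixes \<zeta> K :: real and m n :: nat
  assumes z: "0 < \<zeta>" "\<zeta> < 1" and K: "1 \<le> K" and n: "n \<ge> 1"
    and b: "1 \<le> \<zeta> ^ ((m - 1) * m) * K ^ (n * n)"
  shows "(real m - 1) / real n \<le> sqrt (ln K / ln (1/\<zeta>))"
proof (cases "m = 0")
  case True
  have "(real m - 1) / real n \<le> 0" using True n by simp
  also have "0 \<le> sqrt (ln K / ln (1/\<zeta>))" using K z by (simp add: ln_ge_zero)
  finally show ?thesis .
next
  case False
  define M where "M = real m - 1"
  have M0: "0 \<le> M" using False unfolding M_def by simp
  have lz: "0 < ln (1/\<zeta>)" using z by simp
  have pos: "0 < \<zeta> ^ ((m - 1) * m) * K ^ (n * n)" using z K by simp
  have "0 \<le> ln (\<zeta> ^ ((m - 1) * m) * K ^ (n * n))" using b pos by simp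
  also have "\<dots> = real ((m - 1) * m) * ln \<zeta> + real (n*n) * ln K"
    using z K by (simp add: ln_mult ln_realpow)
  finally have "real ((m - 1) * m) * ln (1/\<zeta>) \<le> real (n*n) * ln K"
    using z by (simp add: ln_div)
  moreover have "M^2 \<le> real ((m - 1) * m)" using False unfolding M_def
    by (simp add: power2_eq_square of_nat_diff mult_left_mono)
  ultimately have "M^2 * ln (1/\<zeta>) \<le> real (n*n) * ln K"
    by (meson lz less_imp_le mult_right_mono order_trans)
  hence "(M / real n)^2 \<le> ln K / ln (1/\<zeta>)"
    using lz n by (simp add: field_simps power2_eq_square)
  hence "M / real n \<le> sqrt (ln K / ln (1/\<zeta>))" by (rule real_le_rsqrt)
  thus ?thesis unfolding M_def .
qed


lemma P_set_X: "[:0, 1:] \<in> P_set \<kappa>" if "\<kappa> \<ge> 0" for \<kappa> :: real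
proof -
  have "irreducible ([:0, 1:] :: int poly)" by (rule irreducible_linear_poly) auto
  moreover have "map_poly (of_int :: int \<Rightarrow> complex) [:0, 1:] = [:0, 1:]" by simp
  ultimately show ?thesis using that unfolding P_set_def by auto
qed

theorem theorem5p4:
  fixes \<kappa> :: real
  assumes "\<kappa> \<ge> 2"
  shows "((\<lambda>\<zeta>. Upsilon \<kappa> \<zeta>) \<longlongrightarrow> 0) (at_right 0)"
proof -
  define L where "L = ln (2*\<kappa>)"
  define g where "g \<zeta> = sqrt (L / ln (1/\<zeta>))" for \<zeta> :: real
  have L: "L > 0" using assms by (simp add: L_def)
  have gt: "(g \<longlongrightarrow> 0) (at_right 0)" unfolding g_def using L by real_asymp
  have bounds: "0 \<le> Upsilon \<kappa> \<zeta> \<and> Upsilon \<kappa> \<zeta> \<le> g \<zeta>" if z: "0 < \<zeta>" "\<zeta> < 1" for \<zeta>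
  proof -
    define S where "S = {Upsilon_pI p I | p I. p \<in> P_set \<kappa> \<and> I \<in> I_set \<kappa> \<zeta>}"
    have ub: "x \<le> g \<zeta>" if "x \<in> S" for x
    proof -
      from that obtain p a where p: "p \<in> P_set \<kappa>" and x: "x = Upsilon_pI p {a..a+\<zeta>}"
        unfolding S_def I_set_def by auto
      define R where "R = {\<theta>::real. poly (map_poly of_int p) \<theta> = 0}"
      have D: "finite R" "card R = degree p" "degree p \<ge> 1" "R \<subseteq> {-\<kappa>..\<kappa>}"
         "1 \<le> (\<Prod>x\<in>R. \<Prod>y\<in>R-{x}. \<bar>x - y\<bar>)"
        using disc_bound[OF p] unfolding R_def by auto
      define T where "T = R \<inter> {a..a+\<zeta>}"
      have Teq: "{\<theta>. \<theta> \<in> {a..a+\<zeta>} \<and> poly (map_poly of_int p) \<theta> = 0} = T"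
        unfolding T_def R_def by auto
      have c: "1 \<le> \<zeta> ^ ((card T - 1) * card T) * (2*\<kappa>) ^ (degree p * degree p)"
        unfolding T_def by (rule cluster_bound[OF D(1,2,4) assms D(5)]) (use z in auto)
      have "(real (card T) - 1) / real (degree p) \<le> sqrt (ln (2*\<kappa>) / ln (1/\<zeta>))"
        by (rule log_bound[OF z _ D(3) c]) (use assms in auto)
      thus ?thesis unfolding x Upsilon_pI_def Teq g_def L_def .
    qed
    have mem0: "0 \<in> S"
    proof -
      have p: "[:0, 1:] \<in> P_set \<kappa>" by (rule P_set_X) (use assms in auto)
      have I: "{0..0+\<zeta>} \<in> I_set \<kappa> \<zeta>" unfolding I_set_def using z assms by auto
      have "{\<theta>::real. \<theta> \<in> {0..0+\<zeta>} \<and> poly (map_poly of_int [:0, 1::int:]) \<theta> = 0} = {0}"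
        using z by auto
      hence "Upsilon_pI [:0, 1:] {0..0+\<zeta>} = 0" unfolding Upsilon_pI_def by simp
      thus ?thesis unfolding S_def using p I by force
    qed
    have bdd: "bdd_above S" using ub by (intro bdd_aboveI) auto
    have "0 \<le> Sup S" by (rule cSup_upper[OF mem0 bdd])
    moreover have "Sup S \<le> g \<zeta>" by (rule cSup_least) (use mem0 ub in auto)
    ultimately show ?thesis unfolding Upsilon_def S_def by simp
  qed
  have ev: "eventually (\<lambda>\<zeta>. 0 \<le> Upsilon \<kappa> \<zeta> \<and> Upsilon \<kappa> \<zeta> \<le> g \<zeta>) (at_right (0::real))"
    unfolding eventually_at_right_field using bounds by (intro exI[of _ 1]) auto
  show ?thesis
    by (rule tendsto_sandwich[of "\<lambda>_. 0" _ _ g])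
       (use ev gt in \<open>auto elim: eventually_mono\<close>)
qed

end
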